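(* Let $\Omega=G/K$ be an irreducible bounded symmetric domain and $\mathcal A\in\mathrm{Gr}(p,T_o\Omega)$ such that $\Sigma(\mathcal A)=cH_0$ for some constant $c$. Then the function $\mathcal B\mapsto\|\Sigma(\mathcal B)\|^2_{\mathfrak g,\mathfrak l}$ on $\mathrm{Gr}(p,T_o\Omega)$ achieves its absolute minimum at $\mathcal A$.
   Context: Data: $\mathfrak g=\mathfrak l\oplus\mathfrak p$ Cartan decomposition of $\mathrm{Lie}(G)$, $H_0$ central in $\mathfrak l$ with $\mathrm{ad}(H_0)^2$ the Cartan involution and $\mathrm{ad}(H_0)|_{\mathfrak p}$ the complex structure at $o=eK$, $\mathfrak p^+\cong T^{1,0}_o\Omega$ the $\sqrt{-1}$-eigenspace of $\mathrm{ad}H_0$ in $\mathfrak p^{\mathbb C}$, with Hermitian form $(\alpha,\overline\beta)_{\mathcal K}$ ($\mathcal K$ the Killing form). $\mathrm{Gr}(p,T_o\Omega)$ is the Grassmannian of complex $p$-planes in $\mathfrak p^+$. For $\mathcal B$ with unitary basis $(e_i)$, $\Sigma(\mathcal B)=\sqrt{-1}\sum_i[e_i,\overline{e_i}]$. $\|\cdot\|_{\mathfrak g,\mathfrak l}$ is the norm on $\mathfrak l^{\mathbb C}$ from the Hermitian form $h_{\mathfrak g,\mathfrak l}(\lambda,\mu)=(\lambda,\overline\mu)_{\mathcal K}$. *)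

theory Defs
  imports "HOL-Analysis.Analysis"
begin

text \<open>Model: the complexified Lie algebra g^C is the complex vector space complex^'n with a
complex-bilinear bracket br. The real form g is the set of vectors fixed by componentwise
complex conjugation (coordinates w.r.t. a real basis of g), so br must commute with conjugation.\<close>

type_synonym 'n cvec = "complex ^ 'n"

definition conjv :: "'n::finite cvec \<Rightarrow> 'n cvec" where
  "conjv X = (\<chi> i. cnj (X $ i))"

definition realv :: "'n::finite cvec \<Rightarrow> bool" where
  "realv X \<longleftrightarrow> conjv X = X"

definition lie_algebra :: "('n::finite cvec \<Rightarrow> 'n cvec \<Rightarrow> 'n cvec) \<Rightarrow> bool" where
  "lie_algebra br \<longleftrightarrow>
     (\<forall>X. Vector_Spaces.linear (*s) (*s) (br X)) \<and>
     (\<forall>Y. Vector_Spaces.linear (*s) (*s) (\<lambda>X. br X Y)) \<and>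
     (\<forall>X. br X X = 0) \<and>
     (\<forall>X Y Z. br X (br Y Z) + br Y (br Z X) + br Z (br X Y) = 0)"

text \<open>Killing form: trace of ad X o ad Y on g^C (equal to the Killing form of g on real elements).\<close>
definition killing :: "('n::finite cvec \<Rightarrow> 'n cvec \<Rightarrow> 'n cvec) \<Rightarrow> 'n cvec \<Rightarrow> 'n cvec \<Rightarrow> complex" where
  "killing br X Y = (\<Sum>i\<in>UNIV. (br X (br Y (axis i 1))) $ i)"

definition real_subspace :: "'n::finite cvec set \<Rightarrow> bool" where
  "real_subspace S \<longleftrightarrow> 0 \<in> S \<and> (\<forall>x\<in>S. \<forall>y\<in>S. x + y \<in> S) \<and>
     (\<forall>r::real. \<forall>x\<in>S. complex_of_real r *s x \<in> S)"

definition real_form :: "'n::finite cvec set" where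
  "real_form = {X. realv X}"

definition real_ideal :: "('n::finite cvec \<Rightarrow> 'n cvec \<Rightarrow> 'n cvec) \<Rightarrow> 'n cvec set \<Rightarrow> bool" where
  "real_ideal br I \<longleftrightarrow> real_subspace I \<and> I \<subseteq> real_form \<and>
     (\<forall>X\<in>real_form. \<forall>Y\<in>I. br X Y \<in> I)"

text \<open>The real Lie algebra g is simple: non-abelian and without nontrivial proper ideals.\<close>
definition simple_real :: "('n::finite cvec \<Rightarrow> 'n cvec \<Rightarrow> 'n cvec) \<Rightarrow> bool" where
  "simple_real br \<longleftrightarrow> (\<exists>X\<in>real_form. \<exists>Y\<in>real_form. br X Y \<noteq> 0) \<and>
     (\<forall>I. real_ideal br I \<longrightarrow> I = {0} \<or> I = real_form)"

text \<open>Cartan decomposition g = l + p of a (noncompact) real Lie algebra.\<close>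
definition cartan_decomposition ::
  "('n::finite cvec \<Rightarrow> 'n cvec \<Rightarrow> 'n cvec) \<Rightarrow> 'n cvec set \<Rightarrow> 'n cvec set \<Rightarrow> bool" where
  "cartan_decomposition br l p \<longleftrightarrow>
     real_subspace l \<and> real_subspace p \<and> l \<subseteq> real_form \<and> p \<subseteq> real_form \<and>
     l \<inter> p = {0} \<and> (\<forall>X\<in>real_form. \<exists>a\<in>l. \<exists>b\<in>p. X = a + b) \<and>
     (\<forall>X\<in>l. \<forall>Y\<in>l. br X Y \<in> l) \<and> (\<forall>X\<in>l. \<forall>Y\<in>p. br X Y \<in> p) \<and>
     (\<forall>X\<in>p. \<forall>Y\<in>p. br X Y \<in> l) \<and>
     (\<forall>X\<in>l. X \<noteq> 0 \<longrightarrow> Re (killing br X X) < 0) \<and>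
     (\<forall>X\<in>p. X \<noteq> 0 \<longrightarrow> Re (killing br X X) > 0)"

text \<open>Data of an irreducible bounded symmetric domain Omega = G/K: g simple, Cartan
decomposition l + p with p nonzero (noncompact type), H0 central in l with ad(H0) restricted to p
a complex structure (ad(H0)^2 = -1 on p).\<close>
definition irreducible_bsd ::
  "('n::finite cvec \<Rightarrow> 'n cvec \<Rightarrow> 'n cvec) \<Rightarrow> 'n cvec set \<Rightarrow> 'n cvec set \<Rightarrow> 'n cvec \<Rightarrow> bool" where
  "irreducible_bsd br l p H0 \<longleftrightarrow>
     lie_algebra br \<and> (\<forall>X Y. br (conjv X) (conjv Y) = conjv (br X Y)) \<and>
     simple_real br \<and> cartan_decomposition br l p \<and> p \<noteq> {0} \<and>
     H0 \<in> l \<and> (\<forall>X\<in>l. br H0 X = 0) \<and> (\<forall>X\<in>p. br H0 (br H0 X) = - X)"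

definition complexify :: "'n::finite cvec set \<Rightarrow> 'n cvec set" where
  "complexify S = {a + \<i> *s b | a b. a \<in> S \<and> b \<in> S}"

text \<open>p^+ : the sqrt(-1)-eigenspace of ad H0 in p^C.\<close>
definition pplus :: "('n::finite cvec \<Rightarrow> 'n cvec \<Rightarrow> 'n cvec) \<Rightarrow> 'n cvec set \<Rightarrow> 'n cvec \<Rightarrow> 'n cvec set" where
  "pplus br p H0 = {X \<in> complexify p. br H0 X = \<i> *s X}"

text \<open>Hermitian form (alpha, conj beta)_K.\<close>
definition herm :: "('n::finite cvec \<Rightarrow> 'n cvec \<Rightarrow> 'n cvec) \<Rightarrow> 'n cvec \<Rightarrow> 'n cvec \<Rightarrow> complex" where
  "herm br X Y = killing br X (conjv Y)"

text \<open>Grassmannian of complex q-planes in P.\<close>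
definition grassmannian :: "nat \<Rightarrow> 'n::finite cvec set \<Rightarrow> 'n cvec set set" where
  "grassmannian q P = {B. vec.subspace B \<and> B \<subseteq> P \<and> vec.dim B = q}"

definition unitary_basis ::
  "('n::finite cvec \<Rightarrow> 'n cvec \<Rightarrow> 'n cvec) \<Rightarrow> nat \<Rightarrow> 'n cvec set \<Rightarrow> (nat \<Rightarrow> 'n cvec) \<Rightarrow> bool" where
  "unitary_basis br q B e \<longleftrightarrow> (\<forall>i<q. e i \<in> B) \<and>
     (\<forall>i<q. \<forall>j<q. herm br (e i) (e j) = (if i = j then 1 else 0)) \<and>
     vec.span (e ` {..<q}) = B"

text \<open>Sigma(B) = sqrt(-1) * sum_i [e_i, conj e_i] for a unitary basis (e_i) of B (independent
of the chosen unitary basis).\<close>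
definition Sigma :: "('n::finite cvec \<Rightarrow> 'n cvec \<Rightarrow> 'n cvec) \<Rightarrow> nat \<Rightarrow> 'n cvec set \<Rightarrow> 'n cvec" where
  "Sigma br q B = (let e = (SOME e. unitary_basis br q B e)
                   in \<i> *s (\<Sum>i<q. br (e i) (conjv (e i))))"

text \<open>Squared norm on l^C from the Hermitian form (lambda, conj mu)_K; since the Killing form is
negative definite on l, the positive definite form is its negative.\<close>
definition normsq_gl :: "('n::finite cvec \<Rightarrow> 'n cvec \<Rightarrow> 'n cvec) \<Rightarrow> 'n cvec \<Rightarrow> real" where
  "normsq_gl br X = Re (- killing br X (conjv X))"

end

theory Submission imports Defs begin

lemma lin_add: "Vector_Spaces.linear (*s) (*s) (f::complex^'n::finite \<Rightarrow> complex^'n) \<Longrightarrow> f (x + y) = f x + f y"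
  by (rule vec.linear_add)
lemma lin_scale: "Vector_Spaces.linear (*s) (*s) (f::complex^'n::finite \<Rightarrow> complex^'n) \<Longrightarrow> f (c *s x) = c *s f x"
  by (rule vec.linear_scale)
lemma lin_sum: "Vector_Spaces.linear (*s) (*s) (f::complex^'n::finite \<Rightarrow> complex^'n) \<Longrightarrow> f (sum g S) = (\<Sum>a\<in>S. f (g a))"
  by (rule vec.linear_sum)

lemma trace_expand:
  fixes f g :: "complex^'n::finite \<Rightarrow> complex^'n"
  assumes lf: "Vector_Spaces.linear (*s) (*s) f"
  shows "f (g (axis i 1)) $ i = (\<Sum>j\<in>UNIV. g (axis i 1) $ j * f (axis j 1) $ i)"
proof -
  have "f (g (axis i 1)) = f (\<Sum>j\<in>UNIV. g (axis i 1) $ j *s axis j 1)"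
    by (simp add: basis_expansion)
  also have "\<dots> = (\<Sum>j\<in>UNIV. g (axis i 1) $ j *s f (axis j 1))"
    by (simp add: lin_sum[OF lf] lin_scale[OF lf])
  finally show ?thesis by (simp add: sum_component)
qed

lemma trace_comm:
  fixes f g :: "complex^'n::finite \<Rightarrow> complex^'n"
  assumes lf: "Vector_Spaces.linear (*s) (*s) f" and lg: "Vector_Spaces.linear (*s) (*s) g"
  shows "(\<Sum>i\<in>UNIV. f (g (axis i 1)) $ i) = (\<Sum>i\<in>UNIV. g (f (axis i 1)) $ i)"
  apply (simp add: trace_expand[OF lf] trace_expand[OF lg])
  apply (subst sum.swap)
  apply (simp add: mult.commute)
  done

lemma conjv_comp[simp]: "conjv X $ i = cnj (X $ i)" by (simp add: conjv_def)
lemma conjv_add[simp]: "conjv (X + Y) = conjv X + conjv Y" by (simp add: conjv_def vec_eq_iff)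
lemma conjv_diff[simp]: "conjv (X - Y) = conjv X - conjv Y" by (simp add: conjv_def vec_eq_iff)
lemma conjv_neg[simp]: "conjv (- X) = - conjv X" by (simp add: conjv_def vec_eq_iff)
lemma conjv_scale[simp]: "conjv (c *s X) = cnj c *s conjv X" by (simp add: conjv_def vec_eq_iff)
lemma conjv_conjv[simp]: "conjv (conjv X) = X" by (simp add: conjv_def vec_eq_iff)
lemma conjv_zero[simp]: "conjv 0 = 0" by (simp add: conjv_def vec_eq_iff)
lemma conjv_axis[simp]: "conjv (axis i 1) = axis i 1" by (simp add: conjv_def vec_eq_iff axis_def)
lemma conjv_sum[simp]: "conjv (sum f S) = (\<Sum>x\<in>S. conjv (f x))"
  by (induction S rule: infinite_finite_induct) auto


lemma span_insert_swap:
  assumes "vec.span A = vec.span B" "a \<in> vec.span (insert b B)" "b \<in> vec.span (insert a A)"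
  shows "vec.span (insert a A) = vec.span (insert b B)"
proof -
  have "vec.span (insert a A) \<subseteq> vec.span (insert b B)"
  proof (rule vec.span_minimal)
    have "A \<subseteq> vec.span B" using assms(1) vec.span_superset by blast
    also have "\<dots> \<subseteq> vec.span (insert b B)" by (rule vec.span_mono) auto
    finally show "insert a A \<subseteq> vec.span (insert b B)" using assms(2) by blast
  qed simp
  moreover have "vec.span (insert b B) \<subseteq> vec.span (insert a A)"
  proof (rule vec.span_minimal)
    have "B \<subseteq> vec.span A" using assms(1) vec.span_superset by blast
    also have "\<dots> \<subseteq> vec.span (insert a A)" by (rule vec.span_mono) auto
    finally show "insert b B \<subseteq> vec.span (insert a A)" using assms(3) by blast
  qed simp
  ultimately show ?thesis by blast
qed

lemma gram_schmidt:
  fixes h :: "'n::finite cvec \<Rightarrow> 'n cvec \<Rightarrow> complex" and W :: "'n cvec set" and v :: "nat \<Rightarrow> 'n cvec"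
  assumes hadd: "\<And>x y z. h (x + y) z = h x z + h y z"
  and hscale: "\<And>c x z. h (c *s x) z = c * h x z"
  and hsym: "\<And>x y. h y x = cnj (h x y)"
  and hpos: "\<And>w. w \<in> W \<Longrightarrow> w \<noteq> 0 \<Longrightarrow> Re (h w w) > 0"
  and W: "vec.subspace W"
  shows "(\<And>i. i < k \<Longrightarrow> v i \<in> W) \<Longrightarrow> (\<And>i. i < k \<Longrightarrow> v i \<notin> vec.span (v ` {..<i})) \<Longrightarrow>
    \<exists>e. (\<forall>i<k. e i \<in> W) \<and> (\<forall>i<k. \<forall>j<k. h (e i) (e j) = (if i = j then 1 else 0)) \<and>
        vec.span (e ` {..<k}) = vec.span (v ` {..<k})"
proof (induction k)
  case 0
  then show ?case by auto
next
  case (Suc k)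
  have hdiff: "h (x - y) z = h x z - h y z" for x y z
    using hadd[of "x - y" y z] by simp
  have hsum: "h (sum f S) z = (\<Sum>a\<in>S. h (f a) z)" for f :: "nat \<Rightarrow> 'n cvec" and S z
  proof (induction S rule: infinite_finite_induct)
    case (empty) show ?case using hscale[of 0 0 z] by simp
  qed (use hscale[of 0 0 z] hadd in auto)
  have hscaleR: "h x (c *s y) = cnj c * h x y" for x y c
  proof -
    have "cnj (h x (c *s y)) = c * cnj (h x y)" using hsym[of "c *s y" x] hsym[of y x] hscale by simp
    then show ?thesis by (metis complex_cnj_cnj complex_cnj_mult)
  qed
  obtain e where eW: "\<forall>i<k. e i \<in> W" and eon: "\<forall>i<k. \<forall>j<k. h (e i) (e j) = (if i = j then 1 else 0)"
    and esp: "vec.span (e ` {..<k}) = vec.span (v ` {..<k})"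
    using Suc by auto
  define w where "w = v k - (\<Sum>j<k. h (v k) (e j) *s e j)"
  have sumsp: "(\<Sum>j<k. h (v k) (e j) *s e j) \<in> vec.span (e ` {..<k})"
    by (intro vec.span_sum vec.span_scale vec.span_base) auto
  have wW: "w \<in> W" unfolding w_def
    using Suc.prems(1)[of k] eW by (intro vec.subspace_diff[OF W] vec.subspace_sum[OF W] vec.subspace_scale[OF W]) auto
  have worth: "h w (e i) = 0" if "i < k" for i
  proof -
    have "h w (e i) = h (v k) (e i) - (\<Sum>j<k. h (v k) (e j) * h (e j) (e i))"
      unfolding w_def by (simp add: hdiff hsum hscale)
    also have "(\<Sum>j<k. h (v k) (e j) * h (e j) (e i)) = (\<Sum>j<k. h (v k) (e j) * (if j = i then 1 else 0))"
      using eon that by (intro sum.cong) auto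
    also have "\<dots> = h (v k) (e i)" using that by (simp add: if_distrib cong: if_cong)
    finally show ?thesis by simp
  qed
  have wne: "w \<noteq> 0"
  proof
    assume "w = 0"
    then have "v k \<in> vec.span (e ` {..<k})" using sumsp unfolding w_def by simp
    then show False using Suc.prems(2)[of k] esp by simp
  qed
  define r where "r = sqrt (Re (h w w))"
  have rpos: "r > 0" unfolding r_def using hpos[OF wW wne] by simp
  have hww: "h w w = complex_of_real (r^2)"
  proof -
    have "Im (h w w) = 0" using hsym[of w w] by (metis cnj.simps(2) complex_cnj_cancel_iff neg_equal_zero)
    then show ?thesis unfolding r_def using hpos[OF wW wne] by (simp add: complex_eq_iff)
  qed
  define c where "c = complex_of_real (1 / r)"
  have cne: "c \<noteq> 0" unfolding c_def using rpos by simp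
  define e' where "e' = e(k := c *s w)"
  have e'k: "e' ` {..<k} = e ` {..<k}" unfolding e'_def by auto
  have "\<forall>i<Suc k. e' i \<in> W"
    using eW vec.subspace_scale[OF W wW] unfolding e'_def by (auto simp: less_Suc_eq)
  moreover have "\<forall>i<Suc k. \<forall>j<Suc k. h (e' i) (e' j) = (if i = j then 1 else 0)"
  proof (intro allI impI)
    fix i j assume i: "i < Suc k" and j: "j < Suc k"
    have ckk: "h (c *s w) (c *s w) = 1"
      using rpos by (simp add: hscale hscaleR hww c_def power2_eq_square)
    have cik: "h (e i) (c *s w) = 0" if "i < k" for i
      using worth[OF that] hsym[of w "e i"] by (simp add: hscaleR)
    have cki: "h (c *s w) (e i) = 0" if "i < k" for i
      using worth[OF that] by (simp add: hscale)
    show "h (e' i) (e' j) = (if i = j then 1 else 0)"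
      using i j eon ckk cik cki unfolding e'_def by (auto simp: less_Suc_eq)
  qed
  moreover have "vec.span (e' ` {..<Suc k}) = vec.span (v ` {..<Suc k})"
  proof -
    have l: "e' ` {..<Suc k} = insert (c *s w) (e ` {..<k})"
      using e'k unfolding lessThan_Suc by (auto simp: e'_def)
    have r: "v ` {..<Suc k} = insert (v k) (v ` {..<k})" unfolding lessThan_Suc by simp
    have a: "c *s w \<in> vec.span (insert (v k) (v ` {..<k}))"
    proof -
      have "(\<Sum>j<k. h (v k) (e j) *s e j) \<in> vec.span (insert (v k) (v ` {..<k}))"
        using sumsp esp vec.span_mono[of "v ` {..<k}" "insert (v k) (v ` {..<k})"] by auto
      moreover have "v k \<in> vec.span (insert (v k) (v ` {..<k}))" by (intro vec.span_base) simp
      ultimately show ?thesis unfolding w_def by (intro vec.span_scale vec.span_diff)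
    qed
    have b: "v k \<in> vec.span (insert (c *s w) (e ` {..<k}))"
    proof -
      have "(\<Sum>j<k. h (v k) (e j) *s e j) \<in> vec.span (insert (c *s w) (e ` {..<k}))"
        using sumsp vec.span_mono[of "e ` {..<k}" "insert (c *s w) (e ` {..<k})"] by auto
      moreover have "(1/c) *s (c *s w) \<in> vec.span (insert (c *s w) (e ` {..<k}))"
        by (intro vec.span_scale vec.span_base) simp
      moreover have "(1/c) *s (c *s w) = w" using cne by simp
      ultimately have "w + (\<Sum>j<k. h (v k) (e j) *s e j) \<in> vec.span (insert (c *s w) (e ` {..<k}))"
        by (metis vec.span_add)
      then show ?thesis unfolding w_def by simp
    qed
    show ?thesis unfolding l r by (rule span_insert_swap[OF esp a b])
  qed
  ultimately show ?case by blast
qed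
lemma realv_conj: "X \<in> S \<Longrightarrow> S \<subseteq> real_form \<Longrightarrow> conjv X = X"
  unfolding real_form_def realv_def by auto

context
  fixes br :: "'n::finite cvec \<Rightarrow> 'n cvec \<Rightarrow> 'n cvec"
  assumes LA: "lie_algebra br" and CJ: "\<forall>X Y. br (conjv X) (conjv Y) = conjv (br X Y)"
begin

lemma linR: "Vector_Spaces.linear (*s) (*s) (br X)" using LA unfolding lie_algebra_def by auto
lemma linL: "Vector_Spaces.linear (*s) (*s) (\<lambda>X. br X Y)" using LA unfolding lie_algebra_def by auto

lemma br_addR: "br X (Y + Z) = br X Y + br X Z" by (rule lin_add[OF linR])
lemma br_scaleR: "br X (c *s Y) = c *s br X Y" by (rule lin_scale[OF linR])
lemma br_sumR: "br X (sum f S) = (\<Sum>a\<in>S. br X (f a))" by (rule lin_sum[OF linR])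
lemma br_diffR: "br X (Y - Z) = br X Y - br X Z" by (rule vec.linear_diff[OF linR])
lemma br_addL: "br (X + Y) Z = br X Z + br Y Z" using lin_add[OF linL[of Z], of X Y] by simp
lemma br_scaleL: "br (c *s X) Z = c *s br X Z" using lin_scale[OF linL[of Z], of c X] by simp
lemma br_diffL: "br (X - Y) Z = br X Z - br Y Z" using vec.linear_diff[OF linL[of Z], of X Y] by simp
lemma br_sumL: "br (sum f S) Z = (\<Sum>a\<in>S. br (f a) Z)" using lin_sum[OF linL[of Z], of f S] by simp
lemma br_self: "br X X = 0" using LA unfolding lie_algebra_def by auto
lemma br_0R[simp]: "br X 0 = 0" by (rule vec.linear_0[OF linR])
lemma br_0L[simp]: "br 0 X = 0" using vec.linear_0[OF linL[of X]] by simp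
lemma br_anti: "br Y X = - br X Y"
proof -
  have "br (X + Y) (X + Y) = 0" by (rule br_self)
  moreover have "br (X + Y) (X + Y) = br X X + br X Y + (br Y X + br Y Y)" by (simp add: br_addL br_addR)
  ultimately have "br X Y + br Y X = 0" by (simp add: br_self)
  then show ?thesis by (metis eq_neg_iff_add_eq_0 add.commute)
qed
lemma jacobi: "br X (br Y Z) + br Y (br Z X) + br Z (br X Y) = 0"
  using LA unfolding lie_algebra_def by auto
lemma ad_comm: "br (br X Y) W = br X (br Y W) - br Y (br X W)"
proof -
  have "br W (br X Y) + br X (br Y W) + br Y (br W X) = 0" by (rule jacobi)
  then have "br W (br X Y) = - (br X (br Y W) + br Y (br W X))"
    by (metis eq_neg_iff_add_eq_0 add.assoc)
  moreover have "br Y (br W X) = - br Y (br X W)"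
    using br_anti[of X W] vec.linear_neg[OF linR] by simp
  ultimately show ?thesis using br_anti[of "br X Y" W] by simp
qed

lemma K_addL: "killing br (X + Y) Z = killing br X Z + killing br Y Z"
  by (simp add: killing_def br_addL sum.distrib)
lemma K_scaleL: "killing br (c *s X) Z = c * killing br X Z"
  by (simp add: killing_def br_scaleL sum_distrib_left)
lemma K_diffL: "killing br (X - Y) Z = killing br X Z - killing br Y Z"
  by (simp add: killing_def br_diffL sum_subtractf)
lemma K_addR: "killing br Z (X + Y) = killing br Z X + killing br Z Y"
  by (simp add: killing_def br_addL br_addR sum.distrib)
lemma K_scaleR: "killing br Z (c *s X) = c * killing br Z X"
  by (simp add: killing_def br_scaleL br_scaleR sum_distrib_left)
lemma K_zeroL: "killing br 0 Z = 0"
  using K_scaleL[of 0 0 Z] by simp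
lemma K_diffR: "killing br Z (X - Y) = killing br Z X - killing br Z Y"
  by (simp add: killing_def br_diffL br_diffR sum_subtractf)
lemma K_sumL: "killing br (sum f S) Z = (\<Sum>a\<in>S. killing br (f a) Z)"
  by (induction S rule: infinite_finite_induct) (auto simp: K_addL K_zeroL)
lemma K_sym: "killing br X Y = killing br Y X"
  unfolding killing_def by (rule trace_comm[OF linR linR])
lemma K_inv: "killing br (br X Y) Z = killing br X (br Y Z)"
proof -
  have lc: "Vector_Spaces.linear (*s) (*s) (br X \<circ> br Z)"
    by (rule Vector_Spaces.linear_compose[OF linR linR])
  have t: "(\<Sum>i\<in>UNIV. br Y ((br X \<circ> br Z) (axis i 1)) $ i) = (\<Sum>i\<in>UNIV. (br X \<circ> br Z) (br Y (axis i 1)) $ i)"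
    by (rule trace_comm[OF linR lc])
  show ?thesis unfolding killing_def
    using t by (simp add: ad_comm br_diffR sum_subtractf)
qed
lemma K_conj: "killing br (conjv X) (conjv Y) = cnj (killing br X Y)"
proof -
  have "br (conjv X) (br (conjv Y) (axis i 1)) = conjv (br X (br Y (axis i 1)))" for i
    using CJ conjv_axis by metis
  then show ?thesis unfolding killing_def by simp
qed

lemma herm_addL: "herm br (X + Y) Z = herm br X Z + herm br Y Z" by (simp add: herm_def K_addL)
lemma herm_scaleL: "herm br (c *s X) Z = c * herm br X Z" by (simp add: herm_def K_scaleL)
lemma herm_sym: "herm br Y X = cnj (herm br X Y)"
  unfolding herm_def using K_conj[of X "conjv Y"] K_sym by simp


lemma herm_pos:
  assumes pr: "p \<subseteq> real_form" and ppos: "\<forall>X\<in>p. X \<noteq> 0 \<longrightarrow> Re (killing br X X) > 0"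
    and w: "w \<in> complexify p" and wne: "w \<noteq> 0"
  shows "Re (herm br w w) > 0"
proof -
  obtain a b where ab: "w = a + \<i> *s b" "a \<in> p" "b \<in> p" using w unfolding complexify_def by auto
  have ca: "conjv a = a" and cb: "conjv b = b" using ab pr realv_conj by auto
  have "herm br w w = killing br (a + \<i> *s b) (a + (- \<i>) *s b)"
    unfolding herm_def ab(1) using ca cb by simp
  also have "\<dots> = killing br a a + killing br b b"
    by (simp add: K_addL K_addR K_diffR K_scaleL K_scaleR K_sym[of b a] algebra_simps)
  finally have eq: "herm br w w = killing br a a + killing br b b" .
  have ga: "Re (killing br a a) \<ge> 0" using ppos ab(2) K_zeroL[of 0] by (cases "a = 0") (auto intro: less_imp_le)
  have gb: "Re (killing br b b) \<ge> 0" using ppos ab(3) K_zeroL[of 0] by (cases "b = 0") (auto intro: less_imp_le)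
  have "a \<noteq> 0 \<or> b \<noteq> 0" using wne ab(1) by auto
  then show ?thesis using eq ga gb ppos ab by auto
qed

lemma unitary_exists:
  assumes pr: "p \<subseteq> real_form" and ppos: "\<forall>X\<in>p. X \<noteq> 0 \<longrightarrow> Re (killing br X X) > 0"
    and B: "B \<in> grassmannian q (pplus br p H0)"
  shows "\<exists>e. unitary_basis br q B e"
proof -
  have Bsub: "vec.subspace B" and BP: "B \<subseteq> complexify p" and dB: "vec.dim B = q"
    using B unfolding grassmannian_def pplus_def by auto
  obtain Bs where Bs: "Bs \<subseteq> B" "vec.independent Bs" "B \<subseteq> vec.span Bs" "card Bs = vec.dim B"
    by (rule vec.basis_exists)
  have fin: "finite Bs" using Bs(2) by (rule vec.finiteI_independent)
  obtain v where v: "bij_betw v {0..<q} Bs" using ex_bij_betw_nat_finite[OF fin] Bs(4) dB by auto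
  have vB: "v i \<in> B" if "i < q" for i using v Bs(1) that unfolding bij_betw_def by auto
  have vind: "v i \<notin> vec.span (v ` {..<i})" if "i < q" for i
  proof
    assume a: "v i \<in> vec.span (v ` {..<i})"
    have "v ` {..<i} \<subseteq> Bs - {v i}"
    proof
      fix x assume "x \<in> v ` {..<i}"
      then obtain j where j: "j < i" "x = v j" by auto
      have "v j \<noteq> v i" using v j that unfolding bij_betw_def inj_on_def by (metis atLeastLessThan_iff le0 less_trans nat_neq_iff)
      moreover have "v j \<in> Bs" using v j that unfolding bij_betw_def by auto
      ultimately show "x \<in> Bs - {v i}" using j by auto
    qed
    then have "v i \<in> vec.span (Bs - {v i})" using a vec.span_mono by blast
    moreover have "v i \<in> Bs" using v that unfolding bij_betw_def by auto
    ultimately show False using Bs(2) vec.dependent_def by blast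
  qed
  have "\<exists>e. (\<forall>i<q. e i \<in> B) \<and> (\<forall>i<q. \<forall>j<q. herm br (e i) (e j) = (if i = j then 1 else 0)) \<and>
        vec.span (e ` {..<q}) = vec.span (v ` {..<q})"
  proof -
    have hp: "\<And>w. w \<in> B \<Longrightarrow> w \<noteq> 0 \<Longrightarrow> Re (herm br w w) > 0"
      using herm_pos[OF pr ppos] BP by blast
    show ?thesis
      by (rule gram_schmidt[where h = "herm br" and W = B and k = q and v = v,
          OF herm_addL herm_scaleL herm_sym hp Bsub vB vind])
  qed
  then obtain e where e: "\<forall>i<q. e i \<in> B" "\<forall>i<q. \<forall>j<q. herm br (e i) (e j) = (if i = j then 1 else 0)"
     "vec.span (e ` {..<q}) = vec.span (v ` {..<q})" by blast
  have "v ` {..<q} = Bs" using v by (simp add: bij_betw_def atLeast0LessThan)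
  then have "vec.span (e ` {..<q}) = B" using e(3) vec.span_subspace[OF Bs(1) Bs(3) Bsub] by simp
  then show ?thesis unfolding unitary_basis_def using e by blast
qed

lemma real_subspace_sum:
  assumes "real_subspace l" "\<And>i. i \<in> S \<Longrightarrow> f i \<in> l"
  shows "sum f S \<in> l"
  using assms unfolding real_subspace_def
  by (induction S rule: infinite_finite_induct) auto

lemma Sigma_term_in_l:
  assumes pr: "p \<subseteq> real_form" and ppl: "\<forall>X\<in>p. \<forall>Y\<in>p. br X Y \<in> l" and ls: "real_subspace l"
    and w: "w \<in> complexify p"
  shows "\<i> *s br w (conjv w) \<in> l"
proof -
  obtain a b where ab: "w = a + \<i> *s b" "a \<in> p" "b \<in> p" using w unfolding complexify_def by auto
  have ca: "conjv a = a" and cb: "conjv b = b" using ab pr realv_conj by auto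
  have ba: "br b a = - br a b" by (rule br_anti)
  have "\<i> *s br w (conjv w) = \<i> *s br (a + \<i> *s b) (a + (- \<i>) *s b)"
    unfolding ab(1) using ca cb by simp
  also have "\<dots> = complex_of_real 2 *s br a b"
    apply (simp only: br_addL br_addR br_diffL br_diffR br_scaleL br_scaleR br_self ba)
    apply (simp add: vec_eq_iff algebra_simps)
    done
  finally have eq: "\<i> *s br w (conjv w) = complex_of_real 2 *s br a b" .
  have "br a b \<in> l" using ppl ab by auto
  then have "complex_of_real 2 *s br a b \<in> l" using ls unfolding real_subspace_def by blast
  then show ?thesis using eq by simp
qed

lemma Sigma_in_l:
  assumes pr: "p \<subseteq> real_form" and ppl: "\<forall>X\<in>p. \<forall>Y\<in>p. br X Y \<in> l" and ls: "real_subspace l"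
    and ub: "unitary_basis br q B e" and BP: "B \<subseteq> complexify p"
  shows "\<i> *s (\<Sum>i<q. br (e i) (conjv (e i))) \<in> l"
proof -
  have "\<i> *s (\<Sum>i<q. br (e i) (conjv (e i))) = (\<Sum>i<q. \<i> *s br (e i) (conjv (e i)))"
    by (rule vec.scale_sum_right)
  moreover have "e i \<in> complexify p" if "i < q" for i using ub BP that unfolding unitary_basis_def by auto
  ultimately show ?thesis
    by (metis (no_types, lifting) Sigma_term_in_l[OF pr ppl ls] real_subspace_sum[OF ls] lessThan_iff)
qed

lemma K_Sigma_H0:
  assumes H0: "conjv H0 = H0"
    and ub: "unitary_basis br q B e" and BP: "B \<subseteq> pplus br p H0"
  shows "killing br (\<i> *s (\<Sum>i<q. br (e i) (conjv (e i)))) H0 = - of_nat q"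
proof -
  have t: "killing br (br (e i) (conjv (e i))) H0 = \<i>" if "i < q" for i
  proof -
    have ep: "br H0 (e i) = \<i> *s e i" and h1: "herm br (e i) (e i) = 1"
      using ub BP that unfolding unitary_basis_def pplus_def by auto
    have "br (conjv (e i)) H0 = - br H0 (conjv (e i))" by (rule br_anti)
    also have "br H0 (conjv (e i)) = conjv (br H0 (e i))" using CJ H0 by metis
    also have "\<dots> = (- \<i>) *s conjv (e i)" using ep by simp
    finally have "br (conjv (e i)) H0 = \<i> *s conjv (e i)" by simp
    then have "killing br (br (e i) (conjv (e i))) H0 = \<i> * killing br (e i) (conjv (e i))"
      by (simp add: K_inv K_scaleR)
    then show ?thesis using h1 unfolding herm_def by simp
  qed
  have "killing br (\<i> *s (\<Sum>i<q. br (e i) (conjv (e i)))) H0 = \<i> * (\<Sum>i<q. \<i>)"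
    using t by (simp add: K_scaleL K_sumL)
  moreover have "\<i> * (\<Sum>i<q. \<i>) = of_nat q * (\<i> * \<i>)" by (simp only: sum_constant card_lessThan mult.left_commute)
  ultimately show ?thesis by simp
qed

end

theorem lemma6:
  fixes br :: "'n::finite cvec \<Rightarrow> 'n cvec \<Rightarrow> 'n cvec"
    and l p :: "'n cvec set" and H0 :: "'n cvec" and q :: nat and A :: "'n cvec set"
  assumes "irreducible_bsd br l p H0"
    and "A \<in> grassmannian q (pplus br p H0)"
    and "\<exists>c::complex. Sigma br q A = c *s H0"
  shows "\<forall>B \<in> grassmannian q (pplus br p H0). normsq_gl br (Sigma br q A) \<le> normsq_gl br (Sigma br q B)"
proof
  fix B assume B: "B \<in> grassmannian q (pplus br p H0)"
  have LA: "lie_algebra br" and CJ: "\<forall>X Y. br (conjv X) (conjv Y) = conjv (br X Y)"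
    and ls: "real_subspace l" and lr: "l \<subseteq> real_form" and pr: "p \<subseteq> real_form"
    and ppl: "\<forall>X\<in>p. \<forall>Y\<in>p. br X Y \<in> l"
    and lneg: "\<forall>X\<in>l. X \<noteq> 0 \<longrightarrow> Re (killing br X X) < 0"
    and ppos: "\<forall>X\<in>p. X \<noteq> 0 \<longrightarrow> Re (killing br X X) > 0"
    and H0l: "H0 \<in> l"
    using assms(1) unfolding irreducible_bsd_def cartan_decomposition_def by auto
  have H0r: "conjv H0 = H0" using H0l lr by (rule realv_conj)
  obtain c where SA: "Sigma br q A = c *s H0" using assms(3) by blast
  have props: "Sigma br q X \<in> l \<and> killing br (Sigma br q X) H0 = - of_nat q"
    if X: "X \<in> grassmannian q (pplus br p H0)" for X
  proof -
    define e where "e = (SOME e. unitary_basis br q X e)"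
    have ub: "unitary_basis br q X e"
      unfolding e_def using unitary_exists[OF LA CJ pr ppos X] by (rule someI_ex)
    have XP: "X \<subseteq> pplus br p H0" using X unfolding grassmannian_def by auto
    then have XC: "X \<subseteq> complexify p" unfolding pplus_def by auto
    have Sg: "Sigma br q X = \<i> *s (\<Sum>i<q. br (e i) (conjv (e i)))"
      unfolding Sigma_def e_def Let_def by simp
    show ?thesis unfolding Sg
      using Sigma_in_l[OF LA CJ pr ppl ls ub XC] K_Sigma_H0[OF LA CJ H0r ub XP] by simp
  qed
  define SA' where "SA' = Sigma br q A"
  define SB where "SB = Sigma br q B"
  define D where "D = SB - SA'"
  have SAl: "SA' \<in> l" and KA: "killing br SA' H0 = - of_nat q" using props[OF assms(2)] SA'_def by auto
  have SBl: "SB \<in> l" and KB: "killing br SB H0 = - of_nat q" using props[OF B] SB_def by auto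
  have Dl: "D \<in> l"
  proof -
    have "complex_of_real (-1) *s SA' \<in> l" using ls SAl unfolding real_subspace_def by blast
    then have "SB + complex_of_real (-1) *s SA' \<in> l" using ls SBl unfolding real_subspace_def by blast
    then show ?thesis unfolding D_def by simp
  qed
  have KD: "killing br D H0 = 0" unfolding D_def using KA KB K_diffL[OF LA CJ] by simp
  have KDA: "killing br D SA' = 0" unfolding SA'_def SA using KD K_scaleR[OF LA CJ] by simp
  have KAD: "killing br SA' D = 0" using KDA K_sym[OF LA CJ] by metis
  have SBe: "SB = SA' + D" unfolding D_def by simp
  have "killing br SB SB = killing br SA' SA' + killing br D D"
    unfolding SBe using KDA KAD by (simp add: K_addL[OF LA CJ] K_addR[OF LA CJ])
  moreover have "Re (killing br D D) \<le> 0"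
    using lneg Dl K_zeroL[OF LA CJ, of 0] by (cases "D = 0") (auto intro: less_imp_le)
  moreover have "conjv SB = SB" "conjv SA' = SA'" using SBl SAl lr realv_conj by auto
  ultimately show "normsq_gl br (Sigma br q A) \<le> normsq_gl br (Sigma br q B)"
    unfolding normsq_gl_def SA'_def[symmetric] SB_def[symmetric] by simp
qed

end
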